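(* Let $X$ be a special (abstract) rank one group with abelian unipotent subgroups $A$ and $B$. For $1 \neq a \in A$ put $n(a) := a\, b(a)^{-1} a$. Then for all $1 \neq a_1, a_2 \in A$, $$B^{a_1 a_2 n(a_2^{-1}) a_2} = B^{a_2 a_1 n(a_1^{-1}) a_1}.$$
   Context: For a group $X$ and $g \in X$, write $B^g = g^{-1}Bg$. A group $X$ is an (abstract) rank one group with abelian unipotent subgroups $A$ and $B$ if $X = \langle A, B\rangle$ where $A$ and $B$ are different abelian subgroups of $X$ such that for each $1 \neq a \in A$ there is an element $1 \neq b \in B$ with $A^b = B^a$, and for each $1 \neq b \in B$ there is an element $1 \neq a \in A$ with $B^a = A^b$. In such a group, for each $1 \neq a \in A$ the element $1 \neq b \in B$ with $A^b = B^a$ is uniquely determined and is denoted $b(a)$. The group $X$ is called special if $b(a^{-1}) = b(a)^{-1}$ for all $1 \neq a \in A$. *)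

theory Defs
  imports "HOL-Algebra.Algebra"
begin

definition conj_set :: "('a, 'b) monoid_scheme \<Rightarrow> 'a set \<Rightarrow> 'a \<Rightarrow> 'a set" where
  "conj_set G S g = (\<lambda>s. inv\<^bsub>G\<^esub> g \<otimes>\<^bsub>G\<^esub> s \<otimes>\<^bsub>G\<^esub> g) ` S"

definition rank_one_group :: "('a, 'b) monoid_scheme \<Rightarrow> 'a set \<Rightarrow> 'a set \<Rightarrow> bool" where
  "rank_one_group G A B \<longleftrightarrow>
     group G \<and> subgroup A G \<and> subgroup B G \<and> A \<noteq> B \<and>
     (\<forall>x\<in>A. \<forall>y\<in>A. x \<otimes>\<^bsub>G\<^esub> y = y \<otimes>\<^bsub>G\<^esub> x) \<and>
     (\<forall>x\<in>B. \<forall>y\<in>B. x \<otimes>\<^bsub>G\<^esub> y = y \<otimes>\<^bsub>G\<^esub> x) \<and>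
     generate G (A \<union> B) = carrier G \<and>
     (\<forall>a\<in>A - {\<one>\<^bsub>G\<^esub>}. \<exists>b\<in>B - {\<one>\<^bsub>G\<^esub>}. conj_set G A b = conj_set G B a) \<and>
     (\<forall>b\<in>B - {\<one>\<^bsub>G\<^esub>}. \<exists>a\<in>A - {\<one>\<^bsub>G\<^esub>}. conj_set G B a = conj_set G A b)"

text \<open>b(a): the unique 1 \<noteq> b \<in> B with A^b = B^a.\<close>
definition b_of :: "('a, 'b) monoid_scheme \<Rightarrow> 'a set \<Rightarrow> 'a set \<Rightarrow> 'a \<Rightarrow> 'a" where
  "b_of G A B a = (THE b. b \<in> B - {\<one>\<^bsub>G\<^esub>} \<and> conj_set G A b = conj_set G B a)"

definition special_rank_one_group :: "('a, 'b) monoid_scheme \<Rightarrow> 'a set \<Rightarrow> 'a set \<Rightarrow> bool" where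
  "special_rank_one_group G A B \<longleftrightarrow> rank_one_group G A B \<and>
     (\<forall>a\<in>A - {\<one>\<^bsub>G\<^esub>}. b_of G A B (inv\<^bsub>G\<^esub> a) = inv\<^bsub>G\<^esub> (b_of G A B a))"

definition n_of :: "('a, 'b) monoid_scheme \<Rightarrow> 'a set \<Rightarrow> 'a set \<Rightarrow> 'a \<Rightarrow> 'a" where
  "n_of G A B a = a \<otimes>\<^bsub>G\<^esub> inv\<^bsub>G\<^esub> (b_of G A B a) \<otimes>\<^bsub>G\<^esub> a"

end

theory Submission
  imports Defs
begin

lemma conj_comp:
  fixes G (structure)
  assumes "group G" "S \<subseteq> carrier G" "g \<in> carrier G" "h \<in> carrier G"
  shows "conj_set G (conj_set G S g) h = conj_set G S (g \<otimes>\<^bsub>G\<^esub> h)"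
proof -
  interpret group G by fact
  have "\<And>s. s \<in> S \<Longrightarrow> inv h \<otimes> (inv g \<otimes> s \<otimes> g) \<otimes> h = inv (g \<otimes> h) \<otimes> s \<otimes> (g \<otimes> h)"
    using assms by (auto simp: inv_mult_group m_assoc)
  then show ?thesis unfolding conj_set_def image_image by (auto intro: image_cong)
qed

lemma conj_one:
  fixes G (structure)
  assumes "group G" "S \<subseteq> carrier G"
  shows "conj_set G S \<one>\<^bsub>G\<^esub> = S"
proof -
  interpret group G by fact
  show ?thesis unfolding conj_set_def using assms by (force simp: image_def)
qed

lemma conj_sub:
  fixes G (structure)
  assumes "group G" "subgroup H G" "g \<in> H"
  shows "conj_set G H g = H"
proof -
  interpret group G by fact
  have gc: "g \<in> carrier G" using assms subgroup.subset by blast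
  have Hc: "H \<subseteq> carrier G" using assms subgroup.subset by blast
  show ?thesis unfolding conj_set_def
  proof
    show "(\<lambda>s. inv g \<otimes> s \<otimes> g) ` H \<subseteq> H"
      using assms by (auto intro!: subgroup.m_closed subgroup.m_inv_closed)
    show "H \<subseteq> (\<lambda>s. inv g \<otimes> s \<otimes> g) ` H"
    proof
      fix x assume x: "x \<in> H"
      have xc: "x \<in> carrier G" using x Hc by blast
      have "g \<otimes> x \<otimes> inv g \<in> H" using assms x by (auto intro!: subgroup.m_closed subgroup.m_inv_closed)
      moreover have "inv g \<otimes> (g \<otimes> x \<otimes> inv g) \<otimes> g = x" using gc xc by (simp add: m_assoc) (simp add: m_assoc[symmetric])
      ultimately show "x \<in> (\<lambda>s. inv g \<otimes> s \<otimes> g) ` H" by (metis image_eqI)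
    qed
  qed
qed

lemma b_of_spec:
  fixes G (structure)
  assumes R: "rank_one_group G A B" and a: "a \<in> A" "a \<noteq> \<one>\<^bsub>G\<^esub>"
  shows "b_of G A B a \<in> B - {\<one>\<^bsub>G\<^esub>} \<and> conj_set G A (b_of G A B a) = conj_set G B a"
proof -
  have grp: "group G" and sA: "subgroup A G" and sB: "subgroup B G" and AB: "A \<noteq> B"
    and ex1: "\<forall>a\<in>A - {\<one>\<^bsub>G\<^esub>}. \<exists>b\<in>B - {\<one>\<^bsub>G\<^esub>}. conj_set G A b = conj_set G B a"
    and ex2: "\<forall>b\<in>B - {\<one>\<^bsub>G\<^esub>}. \<exists>a\<in>A - {\<one>\<^bsub>G\<^esub>}. conj_set G B a = conj_set G A b"
    using R unfolding rank_one_group_def by auto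
  interpret group G by (rule grp)
  have Ac: "A \<subseteq> carrier G" and Bc: "B \<subseteq> carrier G" using sA sB subgroup.subset by blast+
  obtain b where b: "b \<in> B - {\<one>}" "conj_set G A b = conj_set G B a" using ex1 a by blast
  have uniq: "b' = b" if b': "b' \<in> B - {\<one>}" "conj_set G A b' = conj_set G B a" for b'
  proof (rule ccontr)
    assume ne: "b' \<noteq> b"
    define c where "c = b' \<otimes> inv b"
    have bc: "b \<in> carrier G" "b' \<in> carrier G" using b b' Bc by auto
    have cB: "c \<in> B" unfolding c_def using b b' sB by (auto intro!: subgroup.m_closed subgroup.m_inv_closed)
    have c1: "c \<noteq> \<one>"
    proof
      assume "c = \<one>"
      hence "b' \<otimes> inv b \<otimes> b = b" using bc unfolding c_def by simp
      hence "b' = b" using bc by (simp add: m_assoc)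
      thus False using ne by simp
    qed
    have "conj_set G A c = conj_set G (conj_set G A b') (inv b)"
      unfolding c_def using conj_comp[OF grp Ac bc(2)] bc by simp
    also have "\<dots> = conj_set G (conj_set G A b) (inv b)" using b b' by simp
    also have "\<dots> = conj_set G A (b \<otimes> inv b)" using conj_comp[OF grp Ac bc(1)] bc by simp
    also have "\<dots> = A" using bc conj_one[OF grp Ac] by simp
    finally have cA: "conj_set G A c = A" .
    obtain a' where a': "a' \<in> A - {\<one>}" "conj_set G B a' = A" using ex2 cB c1 cA by force
    have a'c: "a' \<in> carrier G" using a' Ac by auto
    have "B = conj_set G B (a' \<otimes> inv a')" using a'c conj_one[OF grp Bc] by simp
    also have "\<dots> = conj_set G (conj_set G B a') (inv a')" using conj_comp[OF grp Bc a'c] a'c by simp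
    also have "\<dots> = A" using a' conj_sub[OF grp sA] sA by (simp add: subgroup.m_inv_closed)
    finally show False using AB by simp
  qed
  have "b_of G A B a = b" unfolding b_of_def
  proof (rule the_equality)
    show "b \<in> B - {\<one>} \<and> conj_set G A b = conj_set G B a" using b by blast
    show "\<And>x. x \<in> B - {\<one>} \<and> conj_set G A x = conj_set G B a \<Longrightarrow> x = b"
      using uniq by blast
  qed
  then show ?thesis using b by simp
qed

lemma main_aux:
  fixes G (structure) and A B :: "'a set" and a1 a2 :: 'a
  assumes "special_rank_one_group G A B"
    and "a1 \<in> A" and "a1 \<noteq> \<one>\<^bsub>G\<^esub>"
    and "a2 \<in> A" and "a2 \<noteq> \<one>\<^bsub>G\<^esub>"
  shows "conj_set G B (a1 \<otimes>\<^bsub>G\<^esub> a2 \<otimes>\<^bsub>G\<^esub> n_of G A B (inv\<^bsub>G\<^esub> a2) \<otimes>\<^bsub>G\<^esub> a2)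
       = conj_set G B (a2 \<otimes>\<^bsub>G\<^esub> a1 \<otimes>\<^bsub>G\<^esub> n_of G A B (inv\<^bsub>G\<^esub> a1) \<otimes>\<^bsub>G\<^esub> a1)"
proof -
  have R: "rank_one_group G A B" and sp: "\<forall>a\<in>A - {\<one>\<^bsub>G\<^esub>}. b_of G A B (inv\<^bsub>G\<^esub> a) = inv\<^bsub>G\<^esub> (b_of G A B a)"
    using assms(1) unfolding special_rank_one_group_def by auto
  have grp: "group G" and sA: "subgroup A G" and sB: "subgroup B G"
    and Bab: "\<forall>x\<in>B. \<forall>y\<in>B. x \<otimes>\<^bsub>G\<^esub> y = y \<otimes>\<^bsub>G\<^esub> x"
    using R unfolding rank_one_group_def by auto
  interpret group G by (rule grp)
  have Ac: "A \<subseteq> carrier G" and Bc: "B \<subseteq> carrier G" using sA sB subgroup.subset by blast+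
  have key: "a \<otimes> n_of G A B (inv a) \<otimes> a = b_of G A B a" if "a \<in> A" "a \<noteq> \<one>" for a
  proof -
    have ac: "a \<in> carrier G" using that Ac by auto
    have bB: "b_of G A B a \<in> B" using b_of_spec[OF R that] by auto
    hence bc: "b_of G A B a \<in> carrier G" using Bc by auto
    have "n_of G A B (inv a) = inv a \<otimes> b_of G A B a \<otimes> inv a"
      unfolding n_of_def using sp that bc by simp
    then show ?thesis using ac bc by (simp add: m_assoc) (simp add: m_assoc[symmetric])
  qed
  have gen: "conj_set G B (x \<otimes> y \<otimes> n_of G A B (inv y) \<otimes> y)
      = conj_set G A (b_of G A B x \<otimes> b_of G A B y)"
    if x: "x \<in> A" "x \<noteq> \<one>" and y: "y \<in> A" "y \<noteq> \<one>" for x y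
  proof -
    have xc: "x \<in> carrier G" and yc: "y \<in> carrier G" using x y Ac by auto
    have bx: "b_of G A B x \<in> carrier G" "b_of G A B y \<in> carrier G"
      using b_of_spec[OF R x] b_of_spec[OF R y] Bc by auto
    have iyA: "inv y \<in> A" using y sA by (simp add: subgroup.m_inv_closed)
    have iy1: "inv y \<noteq> \<one>" using y yc by simp
    have "b_of G A B (inv y) \<in> carrier G" using b_of_spec[OF R iyA iy1] Bc by auto
    hence nc: "n_of G A B (inv y) \<in> carrier G"
      unfolding n_of_def using yc by simp
    have "x \<otimes> y \<otimes> n_of G A B (inv y) \<otimes> y = x \<otimes> (y \<otimes> n_of G A B (inv y) \<otimes> y)"
      using xc yc nc by (simp add: m_assoc)
    also have "\<dots> = x \<otimes> b_of G A B y" using key[OF y] by simp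
    finally have e: "x \<otimes> y \<otimes> n_of G A B (inv y) \<otimes> y = x \<otimes> b_of G A B y" .
    have "conj_set G B (x \<otimes> b_of G A B y) = conj_set G (conj_set G B x) (b_of G A B y)"
      using conj_comp[OF grp Bc xc bx(2)] by simp
    also have "\<dots> = conj_set G (conj_set G A (b_of G A B x)) (b_of G A B y)"
      using b_of_spec[OF R x] by simp
    also have "\<dots> = conj_set G A (b_of G A B x \<otimes> b_of G A B y)"
      using conj_comp[OF grp Ac bx] by simp
    finally show ?thesis using e by simp
  qed
  have "b_of G A B a1 \<otimes> b_of G A B a2 = b_of G A B a2 \<otimes> b_of G A B a1"
    using Bab b_of_spec[OF R assms(2,3)] b_of_spec[OF R assms(4,5)] by auto
  hence "conj_set G A (b_of G A B a1 \<otimes> b_of G A B a2) = conj_set G A (b_of G A B a2 \<otimes> b_of G A B a1)"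
    by (rule arg_cong)
  then show ?thesis unfolding gen[OF assms(2-5)] gen[OF assms(4,5,2,3)] .
qed

theorem lemma2p1:
  fixes G :: "('a, 'b) monoid_scheme" and A B :: "'a set" and a1 a2 :: 'a
  assumes "special_rank_one_group G A B"
    and "a1 \<in> A" and "a1 \<noteq> \<one>\<^bsub>G\<^esub>"
    and "a2 \<in> A" and "a2 \<noteq> \<one>\<^bsub>G\<^esub>"
  shows "conj_set G B (a1 \<otimes>\<^bsub>G\<^esub> a2 \<otimes>\<^bsub>G\<^esub> n_of G A B (inv\<^bsub>G\<^esub> a2) \<otimes>\<^bsub>G\<^esub> a2)
       = conj_set G B (a2 \<otimes>\<^bsub>G\<^esub> a1 \<otimes>\<^bsub>G\<^esub> n_of G A B (inv\<^bsub>G\<^esub> a1) \<otimes>\<^bsub>G\<^esub> a1)"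
  using main_aux[OF assms] .

end
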